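(* Let $\alpha\in(0,1]$, $\lambda_\alpha=\sqrt{\log(1/\alpha)/2}$, $p_1,\dots,p_m\in[0,1]$, and for $A\subseteq\{1,\dots,m\}$, $t\in[0,1]$, $\varphi_{A,t}=\mathbf 1\{i_A(t)>|A|t+\sqrt{|A|}\lambda_\alpha\}$, $\varphi_A=\max_{t\in[0,1]}\varphi_{A,t}$. Then $\hat m_0^{\mathrm{SC1}}:=\hat V^{\mathrm{SC1}}_\varphi(\{1,\dots,m\})$ satisfies $$\hat m_0^{\mathrm{SC1}}=\min_{t\in[0,1)}\Big\lfloor\Big(\frac{\lambda_\alpha}{2(1-t)}+\sqrt{\frac{\lambda_\alpha^2}{4(1-t)^2}+\frac{m-i(t)}{1-t}}\Big)^2\Big\rfloor\wedge m.$$
   Context: $i_A(t)=\#\{j\in A:p_j\le t\}$, $i(t)=i_{\{1,\dots,m\}}(t)$. For $S\subseteq\{1,\dots,m\}$: $\varphi_{S,n,t}=\min\{\varphi_{A,t}:A\subseteq\{1,\dots,m\},|A\cap S|=n\}$ and $\hat V^{\mathrm{SC1}}_\varphi(S)=\max\{n\in\{0,\dots,|S|\}:\max_{t\in[0,1]}\varphi_{S,n,t}=0\}$. *)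

theory Defs
  imports Complex_Main
begin

(* p-values are p :: nat => real, indexed by {1..m} *)

definition lambda_alpha :: "real \<Rightarrow> real" where
  "lambda_alpha \<alpha> = sqrt (ln (1 / \<alpha>) / 2)"

definition iA :: "(nat \<Rightarrow> real) \<Rightarrow> nat set \<Rightarrow> real \<Rightarrow> nat" where
  "iA p A t = card {j \<in> A. p j \<le> t}"

definition phiAt :: "real \<Rightarrow> (nat \<Rightarrow> real) \<Rightarrow> nat set \<Rightarrow> real \<Rightarrow> nat" where
  "phiAt lam p A t =
     (if real (iA p A t) > real (card A) * t + sqrt (real (card A)) * lam then 1 else 0)"

definition phiA :: "real \<Rightarrow> (nat \<Rightarrow> real) \<Rightarrow> nat set \<Rightarrow> nat" where
  "phiA lam p A = Max ((\<lambda>t. phiAt lam p A t) ` {0..1})"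

definition phiSnt :: "nat \<Rightarrow> real \<Rightarrow> (nat \<Rightarrow> real) \<Rightarrow> nat set \<Rightarrow> nat \<Rightarrow> real \<Rightarrow> nat" where
  "phiSnt m lam p S n t =
     Min {phiAt lam p A t | A. A \<subseteq> {1..m} \<and> card (A \<inter> S) = n}"

definition VSC1 :: "nat \<Rightarrow> real \<Rightarrow> (nat \<Rightarrow> real) \<Rightarrow> nat set \<Rightarrow> nat" where
  "VSC1 m lam p S =
     Max {n \<in> {0..card S}. Max ((\<lambda>t. phiSnt m lam p S n t) ` {0..1}) = 0}"

end

theory Submission
  imports Defs
begin

lemma iA_le: "iA p {1..m} t \<le> m"
proof -
  have "iA p {1..m} t \<le> card {1..m}" unfolding iA_def by (rule card_mono) auto
  thus ?thesis by simp
qed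

lemma complement_card:
  "card {j \<in> {1..m}. \<not> p j \<le> t} = m - iA p {1..m} t"
proof -
  have e: "{j \<in> {1..m}. \<not> p j \<le> t} = {1..m} - {j \<in> {1..(m::nat)}. p j \<le> t}" by blast
  have "card ({1..m} - {j \<in> {1..(m::nat)}. p j \<le> t}) = card {1..m} - card {j \<in> {1..(m::nat)}. p j \<le> t}"
    by (rule card_Diff_subset) auto
  thus ?thesis unfolding iA_def e by simp
qed


lemma quad:
  fixes t lam d :: real and n :: nat
  assumes "0 \<le> t" "t < 1" "lam \<ge> 0" "d \<ge> 0"
  shows "real n - d \<le> real n * t + sqrt (real n) * lam \<longleftrightarrow>
    real n \<le> (lam / (2 * (1 - t)) + sqrt (lam\<^sup>2 / (4 * (1 - t)\<^sup>2) + d / (1 - t)))\<^sup>2"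
proof -
  define a where "a = 1 - t"
  have a: "a > 0" using assms a_def by simp
  define x where "x = sqrt (real n)"
  have x: "x \<ge> 0" "x\<^sup>2 = real n" unfolding x_def by auto
  define q where "q = lam / (2 * a)"
  have q: "q \<ge> 0" using a assms unfolding q_def by simp
  have arg: "lam\<^sup>2 / (4 * a\<^sup>2) + d / a = q\<^sup>2 + d / a"
    unfolding q_def by (simp add: power_divide power_mult_distrib)
  define s where "s = sqrt (q\<^sup>2 + d / a)"
  have da: "d / a \<ge> 0" using a assms by simp
  have s2: "s\<^sup>2 = q\<^sup>2 + d / a" unfolding s_def using da by (simp add: add_nonneg_nonneg)
  have sq: "s \<ge> q" unfolding s_def using q da
    by (metis abs_of_nonneg le_add_same_cancel1 real_sqrt_abs real_sqrt_le_mono)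
  have s0: "s \<ge> 0" using sq q by linarith
  have key: "real n - d - (real n * t + sqrt (real n) * lam) = a * (x - (q + s)) * (x - (q - s))"
  proof -
    have "a * (x - (q + s)) * (x - (q - s)) = a * x\<^sup>2 - 2 * a * q * x + a * (q\<^sup>2 - s\<^sup>2)"
      by (simp add: algebra_simps power2_eq_square)
    also have "\<dots> = a * x\<^sup>2 - lam * x - d"
      using a unfolding s2 q_def by (simp add: field_simps)
    finally show ?thesis using x unfolding a_def x_def by (simp add: algebra_simps)
  qed
  have "real n - d \<le> real n * t + sqrt (real n) * lam \<longleftrightarrow> a * (x - (q + s)) * (x - (q - s)) \<le> 0"
    using key by linarith
  also have "\<dots> \<longleftrightarrow> x \<le> q + s"
  proof
    assume h: "a * (x - (q + s)) * (x - (q - s)) \<le> 0"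
    show "x \<le> q + s"
    proof (rule ccontr)
      assume "\<not> x \<le> q + s"
      hence "x - (q + s) > 0" "x - (q - s) > 0" using s0 by auto
      hence "a * (x - (q + s)) * (x - (q - s)) > 0" using a by simp
      thus False using h by simp
    qed
  next
    assume "x \<le> q + s"
    moreover have "x - (q - s) \<ge> 0" using x sq by linarith
    ultimately show "a * (x - (q + s)) * (x - (q - s)) \<le> 0" using a
      by (simp add: mult_nonneg_nonpos mult_nonpos_nonneg)
  qed
  also have "\<dots> \<longleftrightarrow> x\<^sup>2 \<le> (q + s)\<^sup>2"
    using x q s0 by (meson add_nonneg_nonneg power_mono power2_le_imp_le)
  finally show ?thesis using x arg unfolding s_def q_def a_def by simp
qed

lemma exA_iff:
  fixes lam t :: real and n m :: nat
  assumes "n \<le> m" "lam \<ge> 0" "t \<ge> 0"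
  shows "(\<exists>A. A \<subseteq> {1..m} \<and> card A = n \<and> real (iA p A t) \<le> real n * t + sqrt (real n) * lam)
     \<longleftrightarrow> real n - (real m - real (iA p {1..m} t)) \<le> real n * t + sqrt (real n) * lam"
    (is "?L \<longleftrightarrow> ?R")
proof
  assume ?L
  then obtain A where A: "A \<subseteq> {1..m}" "card A = n" "real (iA p A t) \<le> real n * t + sqrt (real n) * lam" by blast
  let ?G = "{j \<in> {1..m}. \<not> p j \<le> t}"
  have "A = {j \<in> A. p j \<le> t} \<union> (A \<inter> ?G)" using A(1) by auto
  hence "card A = card ({j \<in> A. p j \<le> t} \<union> (A \<inter> ?G))" by (rule arg_cong)
  also have "\<dots> \<le> card {j \<in> A. p j \<le> t} + card (A \<inter> ?G)" by (rule card_Un_le)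
  finally have "card A \<le> card {j \<in> A. p j \<le> t} + card (A \<inter> ?G)" .
  moreover have "card (A \<inter> ?G) \<le> card ?G" by (rule card_mono) auto
  ultimately have "n \<le> iA p A t + (m - iA p {1..m} t)"
    using A(2) complement_card[of m p t] unfolding iA_def by simp
  thus ?R using A(3) iA_le[of p m t] by linarith
next
  assume R: ?R
  let ?G = "{j \<in> {1..m}. \<not> p j \<le> t}"
  let ?P = "{j \<in> {1..m}. p j \<le> t}"
  have cG: "card ?G = m - iA p {1..m} t" by (rule complement_card)
  have cL: "card ?P = iA p {1..m} t" unfolding iA_def by simp
  have nonneg: "0 \<le> real n * t + sqrt (real n) * lam" using assms by simp
  show ?L
  proof (cases "n \<le> m - iA p {1..m} t")
    case True
    hence "n \<le> card ?G" using cG by simp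
    then obtain A where A: "A \<subseteq> ?G" "card A = n" "finite A"
      by (rule obtain_subset_with_card_n)
    have "{j \<in> A. p j \<le> t} = {}" using A(1) by auto
    hence "iA p A t = 0" unfolding iA_def by (metis card.empty)
    thus ?thesis using A nonneg by (intro exI[of _ A]) auto
  next
    case False
    have "n - (m - iA p {1..m} t) \<le> card ?P" using cL assms(1) iA_le[of p m t] by simp
    then obtain B where B: "B \<subseteq> ?P" "card B = n - (m - iA p {1..m} t)" "finite B"
      by (rule obtain_subset_with_card_n)
    define A where "A = ?G \<union> B"
    have disj: "?G \<inter> B = {}" using B(1) by auto
    have "B \<subseteq> {1..m}" using B(1) by auto
    hence fB: "finite B" using finite_subset by blast
    have cA: "card A = n" unfolding A_def using card_Un_disjoint[OF _ fB disj] cG B(2) False by simp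
    have "{j \<in> A. p j \<le> t} = B" unfolding A_def using B(1) by auto
    hence "iA p A t = n - (m - iA p {1..m} t)" using B(2) by (simp add: iA_def[of p A t])
    hence "real (iA p A t) = real n - (real m - real (iA p {1..m} t))"
      using False iA_le[of p m t] by simp
    moreover have "A \<subseteq> {1..m}" unfolding A_def using B(1) by auto
    ultimately show ?thesis using R cA by (intro exI[of _ A]) simp
  qed
qed


lemma X_props:
  assumes "n \<le> m"
  shows "finite {phiAt lam p A t | A. A \<subseteq> {1..m} \<and> card (A \<inter> {1..m}) = n}"
    "{phiAt lam p A t | A. A \<subseteq> {1..m} \<and> card (A \<inter> {1..m}) = n} \<noteq> {}"
    "{phiAt lam p A t | A. A \<subseteq> {1..m} \<and> card (A \<inter> {1..m}) = n} \<subseteq> {0,1}"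
proof -
  show 3: "{phiAt lam p A t | A. A \<subseteq> {1..m} \<and> card (A \<inter> {1..m}) = n} \<subseteq> {0,1}"
    unfolding phiAt_def by auto
  show "finite {phiAt lam p A t | A. A \<subseteq> {1..m} \<and> card (A \<inter> {1..m}) = n}"
    by (rule finite_subset[OF 3]) simp
  have "n \<le> card {1..m}" using assms by simp
  then obtain A where A: "A \<subseteq> {1..m}" "card A = n" "finite A" by (rule obtain_subset_with_card_n)
  have "A \<inter> {1..m} = A" using A(1) by blast
  hence "phiAt lam p A t \<in> {phiAt lam p A t | A. A \<subseteq> {1..m} \<and> card (A \<inter> {1..m}) = n}"
    using A by auto
  thus "{phiAt lam p A t | A. A \<subseteq> {1..m} \<and> card (A \<inter> {1..m}) = n} \<noteq> {}" by blast
qed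

lemma phiSnt_zero:
  assumes "n \<le> m"
  shows "phiSnt m lam p {1..m} n t = 0 \<longleftrightarrow>
    (\<exists>A. A \<subseteq> {1..m} \<and> card A = n \<and> real (iA p A t) \<le> real n * t + sqrt (real n) * lam)"
proof -
  define X where "X = {phiAt lam p A t | A. A \<subseteq> {1..m} \<and> card (A \<inter> {1..m}) = n}"
  note XP = X_props[OF assms, of lam p t, folded X_def]
  have "phiSnt m lam p {1..m} n t = Min X" unfolding phiSnt_def X_def ..
  hence "phiSnt m lam p {1..m} n t = 0 \<longleftrightarrow> Min X \<le> 0" by simp
  also have "\<dots> \<longleftrightarrow> (\<exists>x\<in>X. x \<le> 0)" by (rule Min_le_iff[OF XP(1) XP(2)])
  also have "\<dots> \<longleftrightarrow> (\<exists>A. A \<subseteq> {1..m} \<and> card A = n \<and> phiAt lam p A t = 0)"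
  proof
    assume "\<exists>x\<in>X. x \<le> 0"
    then obtain A where "A \<subseteq> {1..m}" "card (A \<inter> {1..m}) = n" "phiAt lam p A t \<le> 0"
      unfolding X_def by blast
    moreover have "A \<inter> {1..m} = A" using \<open>A \<subseteq> {1..m}\<close> by blast
    ultimately show "\<exists>A. A \<subseteq> {1..m} \<and> card A = n \<and> phiAt lam p A t = 0" by auto
  next
    assume "\<exists>A. A \<subseteq> {1..m} \<and> card A = n \<and> phiAt lam p A t = 0"
    then obtain A where A: "A \<subseteq> {1..m}" "card A = n" "phiAt lam p A t = 0" by blast
    moreover have "A \<inter> {1..m} = A" using A(1) by blast
    ultimately have "phiAt lam p A t \<in> X" unfolding X_def by auto
    thus "\<exists>x\<in>X. x \<le> 0" using A(3) by auto
  qed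
  finally have E: "phiSnt m lam p {1..m} n t = 0 \<longleftrightarrow> (\<exists>A. A \<subseteq> {1..m} \<and> card A = n \<and> phiAt lam p A t = 0)" .
  have P: "\<And>A. card A = n \<Longrightarrow> phiAt lam p A t = 0 \<longleftrightarrow> real (iA p A t) \<le> real n * t + sqrt (real n) * lam"
    unfolding phiAt_def by (simp add: not_less)
  show ?thesis unfolding E using P by blast
qed

lemma phiSnt_in: "n \<le> m \<Longrightarrow> phiSnt m lam p {1..m} n t \<in> {0,1}"
proof -
  assume a: "n \<le> m"
  show ?thesis unfolding phiSnt_def by (rule subsetD[OF X_props(3)[OF a] Min_in[OF X_props(1)[OF a] X_props(2)[OF a]]])
qed


lemma cond_iff:
  fixes lam :: real
  assumes "n \<le> m" "lam \<ge> 0"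
  shows "(\<forall>t\<in>{0..1}. phiSnt m lam p {1..m} n t = 0) \<longleftrightarrow>
    (\<forall>t\<in>{0..<1}. int n \<le> \<lfloor>(lam / (2 * (1 - t))
                  + sqrt (lam\<^sup>2 / (4 * (1 - t)\<^sup>2)
                          + (real m - real (iA p {1..m} t)) / (1 - t)))\<^sup>2\<rfloor>)"
proof -
  have step: "phiSnt m lam p {1..m} n t = 0 \<longleftrightarrow>
     real n - (real m - real (iA p {1..m} t)) \<le> real n * t + sqrt (real n) * lam" if "t \<ge> 0" for t
    using phiSnt_zero[OF assms(1)] exA_iff[OF assms(1) assms(2) that] by simp
  have one: "phiSnt m lam p {1..m} n 1 = 0"
  proof -
    have "0 \<le> sqrt (real n) * lam" using assms(2) by simp
    moreover have "real (iA p {1..m} 1) \<le> real m" using iA_le[of p m 1] by simp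
    ultimately show ?thesis using step[of 1] by simp
  qed
  have lt: "phiSnt m lam p {1..m} n t = 0 \<longleftrightarrow> int n \<le> \<lfloor>(lam / (2 * (1 - t))
                  + sqrt (lam\<^sup>2 / (4 * (1 - t)\<^sup>2)
                          + (real m - real (iA p {1..m} t)) / (1 - t)))\<^sup>2\<rfloor>"
    if "t \<in> {0..<1}" for t
  proof -
    have d: "real m - real (iA p {1..m} t) \<ge> 0" using iA_le[of p m t] by simp
    have t0: "t \<ge> 0" "t < 1" using that by auto
    show ?thesis using step[OF t0(1)] quad[of t lam _ n, OF t0 assms(2) d]
      by (simp add: le_floor_iff)
  qed
  show ?thesis
  proof
    assume "\<forall>t\<in>{0..1}. phiSnt m lam p {1..m} n t = 0"
    thus "\<forall>t\<in>{0..<1}. int n \<le> \<lfloor>(lam / (2 * (1 - t))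
                  + sqrt (lam\<^sup>2 / (4 * (1 - t)\<^sup>2)
                          + (real m - real (iA p {1..m} t)) / (1 - t)))\<^sup>2\<rfloor>" using lt by auto
  next
    assume h: "\<forall>t\<in>{0..<1}. int n \<le> \<lfloor>(lam / (2 * (1 - t))
                  + sqrt (lam\<^sup>2 / (4 * (1 - t)\<^sup>2)
                          + (real m - real (iA p {1..m} t)) / (1 - t)))\<^sup>2\<rfloor>"
    show "\<forall>t\<in>{0..1}. phiSnt m lam p {1..m} n t = 0"
    proof
      fix t :: real assume t: "t \<in> {0..1}"
      show "phiSnt m lam p {1..m} n t = 0"
      proof (cases "t = 1")
        case True thus ?thesis using one by simp
      next
        case False thus ?thesis using t h lt by auto
      qed
    qed
  qed
qed


theorem mainTheorem11:
  fixes \<alpha> :: real and m :: nat and p :: "nat \<Rightarrow> real"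
  assumes "0 < \<alpha>" and "\<alpha> \<le> 1"
    and "\<forall>j\<in>{1..m}. 0 \<le> p j \<and> p j \<le> 1"
  shows "int (VSC1 m (lambda_alpha \<alpha>) p {1..m}) =
    min (Inf { \<lfloor>(lambda_alpha \<alpha> / (2 * (1 - t))
                  + sqrt ((lambda_alpha \<alpha>)\<^sup>2 / (4 * (1 - t)\<^sup>2)
                          + (real m - real (iA p {1..m} t)) / (1 - t)))\<^sup>2\<rfloor>
              | t. t \<in> {0..<1} })
        (int m)" (is "_ = min (Inf ?F) _")
proof -
  define lam where "lam = lambda_alpha \<alpha>"
  have "1 \<le> 1 / \<alpha>" using assms(1,2) by simp
  hence "ln (1 / \<alpha>) \<ge> 0" by simp
  hence lam0: "lam \<ge> 0" unfolding lam_def lambda_alpha_def by simp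
  define R where "R t = \<lfloor>(lam / (2 * (1 - t))
                  + sqrt (lam\<^sup>2 / (4 * (1 - t)\<^sup>2)
                          + (real m - real (iA p {1..m} t)) / (1 - t)))\<^sup>2\<rfloor>" for t
  have F: "?F = R ` {0..<1}" unfolding R_def lam_def by auto
  have Fne: "R ` {0..<1} \<noteq> {}" by simp
  have R0: "\<And>t. R t \<ge> 0" unfolding R_def by simp
  have Fbdd: "bdd_below (R ` {0..<1})" using R0 by (intro bdd_belowI[of _ 0]) auto
  define K where "K = Inf (R ` {0..<1})"
  have K0: "K \<ge> 0" unfolding K_def using R0 by (simp add: le_cInf_iff[OF Fne Fbdd])
  have leK: "int n \<le> K \<longleftrightarrow> (\<forall>t\<in>{0..<1}. int n \<le> R t)" for n
    unfolding K_def by (simp add: le_cInf_iff[OF Fne Fbdd])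
  have fin1: "finite ((\<lambda>t. phiSnt m lam p {1..m} n t) ` {0..1})" 
    and sub1: "(\<lambda>t. phiSnt m lam p {1..m} n t) ` {0..1} \<subseteq> {0,1}"
    if "n \<le> m" for n
  proof -
    show "(\<lambda>t. phiSnt m lam p {1..m} n t) ` {0..1} \<subseteq> {0,1}" using phiSnt_in[OF that, of lam p] by (intro image_subsetI) blast
    thus "finite ((\<lambda>t. phiSnt m lam p {1..m} n t) ` {0..1})" by (rule finite_subset) simp
  qed
  have maxiff: "Max ((\<lambda>t. phiSnt m lam p {1..m} n t) ` {0..1}) = 0 \<longleftrightarrow>
      (\<forall>t\<in>{0..1}. phiSnt m lam p {1..m} n t = 0)" if "n \<le> m" for n
  proof -
    have ne: "(\<lambda>t. phiSnt m lam p {1..m} n t) ` {0..1} \<noteq> {}" by simp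
    have "Max ((\<lambda>t. phiSnt m lam p {1..m} n t) ` {0..1}) = 0 \<longleftrightarrow>
       Max ((\<lambda>t. phiSnt m lam p {1..m} n t) ` {0..1}) \<le> 0" by simp
    also have "\<dots> \<longleftrightarrow> (\<forall>x\<in>(\<lambda>t. phiSnt m lam p {1..m} n t) ` {0..1}. x \<le> 0)"
      by (rule Max_le_iff[OF fin1[OF that] ne])
    finally show ?thesis by simp
  qed
  define V where "V = {n \<in> {0..card {1..m}}. Max ((\<lambda>t. phiSnt m lam p {1..m} n t) ` {0..1}) = 0}"
  have V: "V = {n. n \<le> m \<and> int n \<le> K}"
  proof -
    have "n \<in> V \<longleftrightarrow> n \<le> m \<and> int n \<le> K" for n
    proof (cases "n \<le> m")
      case True
      show ?thesis unfolding V_def leK using True maxiff[OF True] cond_iff[OF True lam0]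
        unfolding R_def by simp
    next
      case False thus ?thesis unfolding V_def by simp
    qed
    thus ?thesis by blast
  qed
  define k where "k = nat (min K (int m))"
  have kV: "k \<in> V" unfolding V k_def using K0 by simp
  have kmax: "\<And>n. n \<in> V \<Longrightarrow> n \<le> k" unfolding V k_def by auto
  have finV: "finite V" unfolding V by (rule finite_subset[of _ "{..m}"]) auto
  have "VSC1 m lam p {1..m} = Max V" unfolding VSC1_def V_def ..
  also have "\<dots> = k" using kV kmax finV by (intro Max_eqI) auto
  finally have "int (VSC1 m lam p {1..m}) = min K (int m)" unfolding k_def using K0 by simp
  thus ?thesis unfolding F K_def lam_def .
qed

end
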